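(* Let $n\ge 3$. For an SSM-recurrent configuration $c$ on $W_n$, let $\Phi_W(c)=(\mathcal O,M)$ where $\mathcal O=\mathcal O(m(c))$ and $M$ is the set of vertices $i\in[n]$ with $c_i=2$ that are not cyclically first maximal vertices of $c$. Then $\Phi_W$ is a bijection from the set of SSM-recurrent configurations on $W_n$ to the set $\mathrm{PMO}(C_n)$ of properly-marked orientations of $C_n$. Moreover $\mathrm{level}(c)=|M|$ and $\mathrm{weight}^{01^*}(c)$ equals the number of clockwise-directed edges of $\mathcal O$.
   Context: $C_n$: cycle on $[n]$ with edges $\{i,i+1\}$ (indices mod $n$, vertices arranged clockwise); $W_n$: $C_n$ plus sink $0$ adjacent to all of $[n]$. Stable configurations on $W_n$ are $c\in\{0,1,2\}^n$. SSM (parameter $p\in(0,1)$: a toppling vertex sends a grain to each neighbour independently with probability $p$, grains to the sink vanish); its Markov chain adds a grain at a random vertex and stabilises; SSM-recurrent = recurrent state; known: stable $c$ is SSM-recurrent iff for all $i,j$ with $c_i=c_j=0$ some $k\in(i,j)$ has $c_k=2$, where $(i,j)$ is the set of vertices strictly between $i$ and $j$ clockwise from $i$ to $j$ and $(i,i)=[n]\setminus\{i\}$. Minimal SSM-recurrent: no other SSM-recurrent configuration is componentwise $\le c$. Level: $\mathrm{level}(c)=\sum_i c_i-n$. A vertex $i$ is cyclically first maximal in $c$ if $c_i=2$ and there is $j$ with $c_j=0$ and $c_k=1$ for all $k\in(j,i)$. Canonical minimal configuration $m(c)$: $m(c)_i=0$ if $c_i=0$, $2$ if $i$ is cyclically first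 maximal, $1$ otherwise. For a minimal SSM-recurrent $c'$, $\mathcal O(c')$ is the unique orientation of $C_n$ with in-degree $c'_i$ at every vertex $i$ if $c'\ne(1,\ldots,1)$, and the counter-clockwise directed cycle ($i+1\to i$ for all $i$) if $c'=(1,\ldots,1)$. An edge $\{i,i+1\}$ is clockwise if directed $i\to i+1$, counter-clockwise if $i+1\to i$. A properly-marked orientation of $C_n$ is a pair $(\mathcal O,M)$, $\mathcal O$ an orientation of $C_n$ and $M\subseteq[n]$, such that every $i\in M$ satisfies $i+1\to i\to i-1$ in $\mathcal O$, and $\mathcal O$ has at least one counter-clockwise edge. A $01^*$-chain of $c$ is a set of consecutive vertices $j,j+1,\ldots,j+k$ with $c_j=0$ and $c_{j'}=1$ for $j<j'\le j+k$; $\mathrm{weight}^{01^*}(c)$ is the number of vertices $i$ belonging to some $01^*$-chain (i.e. $c_i=0$, or $c_i=1$ and there is $j$ with $c_j=0$ and $c_k=1$ for all $k$ in the clockwise half-open interval $(j,i]$). *)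

theory Defs
  imports Main
begin

text \<open>The sink 0 of the wheel W_n plays no
role in the combinatorial definitions below. A configuration is a function
c :: nat => nat, only its values on {1..n} matter (we require 0 outside).\<close>

definition vert :: "nat \<Rightarrow> nat set" where
  "vert n = {1..n}"

definition succ :: "nat \<Rightarrow> nat \<Rightarrow> nat" where
  "succ n i = (i mod n) + 1"

definition pred :: "nat \<Rightarrow> nat \<Rightarrow> nat" where
  "pred n i = ((i + n - 2) mod n) + 1"

text \<open>clockwise distance from i to j, with the distance from i to itself taken as n
(so that the open interval (i,i) is [n] minus i)\<close>
definition cwd :: "nat \<Rightarrow> nat \<Rightarrow> nat \<Rightarrow> nat" where
  "cwd n i j = (let d = nat ((int j - int i) mod int n) in if d = 0 then n else d)"

definition cyc_open :: "nat \<Rightarrow> nat \<Rightarrow> nat \<Rightarrow> nat set" where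
  "cyc_open n i j = {k \<in> vert n. k \<noteq> i \<and> cwd n i k < cwd n i j}"

definition stable :: "nat \<Rightarrow> (nat \<Rightarrow> nat) set" where
  "stable n = {c. (\<forall>i\<in>vert n. c i \<le> 2) \<and> (\<forall>i. i \<notin> vert n \<longrightarrow> c i = 0)}"

text \<open>SSM-recurrent configurations, via the known characterisation\<close>
definition ssm_recurrent :: "nat \<Rightarrow> (nat \<Rightarrow> nat) set" where
  "ssm_recurrent n = {c \<in> stable n. \<forall>i\<in>vert n. \<forall>j\<in>vert n.
      c i = 0 \<and> c j = 0 \<longrightarrow> (\<exists>k\<in>cyc_open n i j. c k = 2)}"

definition level :: "nat \<Rightarrow> (nat \<Rightarrow> nat) \<Rightarrow> int" where
  "level n c = (\<Sum>i\<in>vert n. int (c i)) - int n"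

definition cyc_first_max :: "nat \<Rightarrow> (nat \<Rightarrow> nat) \<Rightarrow> nat \<Rightarrow> bool" where
  "cyc_first_max n c i \<longleftrightarrow> c i = 2 \<and>
     (\<exists>j\<in>vert n. c j = 0 \<and> (\<forall>k\<in>cyc_open n j i. c k = 1))"

definition mcan :: "nat \<Rightarrow> (nat \<Rightarrow> nat) \<Rightarrow> (nat \<Rightarrow> nat)" where
  "mcan n c = (\<lambda>i. if i \<notin> vert n then 0 else if c i = 0 then 0
                  else if cyc_first_max n c i then 2 else 1)"

text \<open>Orientations of C_n: ori i for i in [n] describes the edge {i, i+1};
ori i = True means clockwise (i \<rightarrow> i+1), False means counter-clockwise (i+1 \<rightarrow> i).\<close>
definition orientations :: "nat \<Rightarrow> (nat \<Rightarrow> bool) set" where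
  "orientations n = {ori. \<forall>i. i \<notin> vert n \<longrightarrow> \<not> ori i}"

definition indeg :: "nat \<Rightarrow> (nat \<Rightarrow> bool) \<Rightarrow> nat \<Rightarrow> nat" where
  "indeg n ori i = (if ori (pred n i) then 1 else 0) + (if \<not> ori i then 1 else 0)"

definition orient_of :: "nat \<Rightarrow> (nat \<Rightarrow> nat) \<Rightarrow> (nat \<Rightarrow> bool)" where
  "orient_of n c' = (if \<forall>i\<in>vert n. c' i = 1 then (\<lambda>i. False)
     else (THE ori. ori \<in> orientations n \<and> (\<forall>i\<in>vert n. indeg n ori i = c' i)))"

definition PMO :: "nat \<Rightarrow> ((nat \<Rightarrow> bool) \<times> nat set) set" where
  "PMO n = {(ori, M). ori \<in> orientations n \<and> M \<subseteq> vert n \<and>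
      (\<forall>i\<in>M. \<not> ori i \<and> \<not> ori (pred n i)) \<and> (\<exists>i\<in>vert n. \<not> ori i)}"

definition Phi_W :: "nat \<Rightarrow> (nat \<Rightarrow> nat) \<Rightarrow> (nat \<Rightarrow> bool) \<times> nat set" where
  "Phi_W n c = (orient_of n (mcan n c), {i \<in> vert n. c i = 2 \<and> \<not> cyc_first_max n c i})"

definition weight01 :: "nat \<Rightarrow> (nat \<Rightarrow> nat) \<Rightarrow> nat" where
  "weight01 n c = card {i \<in> vert n. c i = 0 \<or> (c i = 1 \<and>
      (\<exists>j\<in>vert n. c j = 0 \<and> (\<forall>k\<in>cyc_open n j i \<union> {i}. c k = 1)))}"

definition num_cw :: "nat \<Rightarrow> (nat \<Rightarrow> bool) \<Rightarrow> nat" where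
  "num_cw n ori = card {i \<in> vert n. ori i}"

end

theory Submission
  imports Defs
begin


lemma pred_eq: "i \<in> vert n \<Longrightarrow> pred n i = (if i = 1 then n else i - 1)"
proof -
  assume i: "i \<in> vert n"
  hence "1 \<le> i" "i \<le> n" by (auto simp: vert_def)
  show ?thesis
  proof (cases "i = 1")
    case True thus ?thesis using \<open>i \<le> n\<close> by (simp add: pred_def)
  next
    case False
    hence "i + n - 2 = (i - 2) + n" using \<open>1 \<le> i\<close> by simp
    moreover have "(i - 2) mod n = i - 2" using \<open>i \<le> n\<close> \<open>1 \<le> i\<close> by (intro mod_less) linarith
    ultimately have "(i + n - 2) mod n = i - 2" by simp
    thus ?thesis using False \<open>1 \<le> i\<close> by (simp add: pred_def)
  qed
qed

lemma pred_vert: "i \<in> vert n \<Longrightarrow> pred n i \<in> vert n"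
  by (auto simp: pred_eq vert_def)

lemma cwd_eq: "j \<in> vert n \<Longrightarrow> k \<in> vert n \<Longrightarrow> cwd n j k = (if j < k then k - j else k + n - j)"
proof -
  assume j: "j \<in> vert n" and k: "k \<in> vert n"
  hence b: "1 \<le> j" "j \<le> n" "1 \<le> k" "k \<le> n" by (auto simp: vert_def)
  show ?thesis
  proof (cases "j < k")
    case True
    have "(int k - int j) mod int n = int k - int j" using b True by (simp add: mod_pos_pos_trivial)
    thus ?thesis using True by (simp add: cwd_def Let_def)
  next
    case False
    show ?thesis
    proof (cases "j = k")
      case True thus ?thesis by (simp add: cwd_def)
    next
      case F: False
      have "(int k - int j) mod int n = int k - int j + int n"
      proof -
        have "(int k - int j + int n) mod int n = int k - int j + int n"
          using b False F by (intro mod_pos_pos_trivial) auto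
        thus ?thesis by simp
      qed
      thus ?thesis using False F b by (simp add: cwd_def Let_def)
    qed
  qed
qed

lemma cwd_pred: assumes "n \<ge> 2" "i \<in> vert n" "j \<in> vert n" "pred n i \<noteq> j"
  shows "cwd n j i = Suc (cwd n j (pred n i))"
proof -
  have p: "pred n i \<in> vert n" using pred_vert assms by blast
  show ?thesis using assms unfolding cwd_eq[OF assms(3) assms(2)] cwd_eq[OF assms(3) p]
    by (auto simp: pred_eq vert_def)
qed

lemma cwd_inj: assumes "j \<in> vert n" "k \<in> vert n" "k' \<in> vert n" "cwd n j k = cwd n j k'"
  shows "k = k'"
  using assms(4) unfolding cwd_eq[OF assms(1) assms(2)] cwd_eq[OF assms(1) assms(3)]
  using assms(1-3) by (auto simp: vert_def split: if_splits)

lemma cwd_lt: assumes "j \<in> vert n" "k \<in> vert n" shows "cwd n j k \<le> n" "k \<noteq> j \<Longrightarrow> 0 < cwd n j k"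
   "k \<noteq> j \<Longrightarrow> cwd n j k < n" "cwd n j j = n"
  using assms by (auto simp: cwd_eq vert_def)

lemma CO: assumes "n \<ge> 2" "i \<in> vert n" "j \<in> vert n" "pred n i \<noteq> j"
  shows "cyc_open n j i = insert (pred n i) (cyc_open n j (pred n i))"
proof -
  have p: "pred n i \<in> vert n" using pred_vert assms by blast
  have e: "cwd n j i = Suc (cwd n j (pred n i))" by (rule cwd_pred[OF assms])
  show ?thesis unfolding cyc_open_def e using p assms cwd_inj[OF assms(3) _ p]
    by (auto simp: less_Suc_eq)
qed

lemma CO0: assumes "n \<ge> 2" "i \<in> vert n"
  shows "cyc_open n (pred n i) i = {}"
proof -
  have p: "pred n i \<in> vert n" using pred_vert assms by blast
  have "cwd n (pred n i) i = 1" using cwd_eq[OF p assms(2)] assms by (auto simp: pred_eq vert_def)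
  thus ?thesis unfolding cyc_open_def using cwd_lt[OF p] by fastforce
qed



definition Aof :: "nat \<Rightarrow> (nat\<Rightarrow>nat) \<Rightarrow> nat \<Rightarrow> bool" where
  "Aof n c i = (\<exists>j\<in>vert n. c j = 0 \<and> (\<forall>k\<in>cyc_open n j i. c k = 1))"

definition Wof :: "nat \<Rightarrow> (nat\<Rightarrow>nat) \<Rightarrow> nat \<Rightarrow> bool" where
  "Wof n c k = (c k = 0 \<or> (c k = 1 \<and> Aof n c k))"

lemma A_rec: assumes "n \<ge> 2" "i \<in> vert n" "c i \<noteq> 0"
  shows "Aof n c i \<longleftrightarrow> c (pred n i) = 0 \<or> (c (pred n i) = 1 \<and> Aof n c (pred n i))"
proof
  assume "Aof n c i"
  then obtain j where j: "j \<in> vert n" "c j = 0" "\<forall>k\<in>cyc_open n j i. c k = 1" unfolding Aof_def by blast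
  show "c (pred n i) = 0 \<or> (c (pred n i) = 1 \<and> Aof n c (pred n i))"
  proof (cases "pred n i = j")
    case True thus ?thesis using j by simp
  next
    case False
    have "cyc_open n j i = insert (pred n i) (cyc_open n j (pred n i))" using CO[OF assms(1,2) j(1) False] .
    thus ?thesis using j unfolding Aof_def by auto
  qed
next
  assume h: "c (pred n i) = 0 \<or> (c (pred n i) = 1 \<and> Aof n c (pred n i))"
  have p: "pred n i \<in> vert n" using pred_vert assms by blast
  show "Aof n c i"
  proof (cases "c (pred n i) = 0")
    case True thus ?thesis unfolding Aof_def using CO0[OF assms(1,2)] p by blast
  next
    case False
    with h obtain j where j: "j \<in> vert n" "c j = 0" "\<forall>k\<in>cyc_open n j (pred n i). c k = 1"
      and c1: "c (pred n i) = 1" unfolding Aof_def by blast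
    have "pred n i \<noteq> j" using j c1 by auto
    from CO[OF assms(1,2) j(1) this] show ?thesis unfolding Aof_def using j c1 by (intro bexI[of _ j]) auto
  qed
qed

lemma W_rec: assumes "n \<ge> 2" "i \<in> vert n"
  shows "Wof n c i \<longleftrightarrow> c i = 0 \<or> (c i = 1 \<and> Wof n c (pred n i))"
  using A_rec[OF assms, of c] unfolding Wof_def by auto

definition fwd :: "nat \<Rightarrow> nat \<Rightarrow> nat \<Rightarrow> nat" where
  "fwd n i t = (if i + t \<le> n then i + t else i + t - n)"

lemma fwd_vert: "i \<in> vert n \<Longrightarrow> t < n \<Longrightarrow> fwd n i t \<in> vert n"
  by (auto simp: fwd_def vert_def)

lemma fwd_0: "i \<in> vert n \<Longrightarrow> fwd n i 0 = i" by (simp add: fwd_def vert_def)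

lemma fwd_pred: "i \<in> vert n \<Longrightarrow> 0 < t \<Longrightarrow> t < n \<Longrightarrow> pred n (fwd n i t) = fwd n i (t - 1)"
  using fwd_vert[of i n t] by (auto simp: pred_eq fwd_def vert_def)

lemma fwd_cwd: "i \<in> vert n \<Longrightarrow> 0 < t \<Longrightarrow> t < n \<Longrightarrow> cwd n i (fwd n i t) = t"
  using fwd_vert[of i n t] by (auto simp: cwd_eq fwd_def vert_def)

lemma fwd_surj: "i \<in> vert n \<Longrightarrow> k \<in> vert n \<Longrightarrow> \<exists>t<n. fwd n i t = k"
proof -
  assume a: "i \<in> vert n" "k \<in> vert n"
  show ?thesis
  proof (cases "i \<le> k")
    case True thus ?thesis using a by (intro exI[of _ "k - i"]) (auto simp: fwd_def vert_def)
  next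
    case False thus ?thesis using a by (intro exI[of _ "k + n - i"]) (auto simp: fwd_def vert_def)
  qed
qed

lemma cycle_induct: assumes "n \<ge> 2" "k0 \<in> vert n" "P k0" "\<And>k. k \<in> vert n \<Longrightarrow> P (pred n k) \<Longrightarrow> P k"
  shows "\<forall>k\<in>vert n. P k"
proof -
  have "\<forall>t. t < n \<longrightarrow> P (fwd n k0 t)"
  proof
    fix t show "t < n \<longrightarrow> P (fwd n k0 t)"
    proof (induction t)
      case 0 thus ?case using assms(2,3) by (simp add: fwd_0)
    next
      case (Suc t)
      show ?case
      proof
        assume "Suc t < n"
        hence "P (pred n (fwd n k0 (Suc t)))" using Suc fwd_pred[OF assms(2), of "Suc t"] by simp
        thus "P (fwd n k0 (Suc t))" using assms(4) fwd_vert[OF assms(2) \<open>Suc t < n\<close>] by blast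
      qed
    qed
  qed
  thus ?thesis using fwd_surj[OF assms(2)] by blast
qed

lemma discrete_ivt: "P 0 \<Longrightarrow> \<not> P m \<Longrightarrow> \<exists>t<m. P t \<and> \<not> P (Suc t)"
proof (induction m)
  case 0 thus ?case by simp
next
  case (Suc m)
  show ?case
  proof (cases "P m")
    case True thus ?thesis using Suc by auto
  next
    case False thus ?thesis using Suc by (metis less_Suc_eq)
  qed
qed

lemma R0: assumes "n \<ge> 2" "c \<in> ssm_recurrent n" "i \<in> vert n" "c i = 0"
  shows "\<not> Wof n c (pred n i)"
proof
  assume W: "Wof n c (pred n i)"
  have p: "pred n i \<in> vert n" using pred_vert assms by blast
  have rec: "\<And>j. j \<in> vert n \<Longrightarrow> c j = 0 \<Longrightarrow> \<exists>k\<in>cyc_open n j i. c k = 2"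
    using assms(2-4) unfolding ssm_recurrent_def by blast
  show False
  proof (cases "c (pred n i) = 0")
    case True thus False using rec[OF p True] CO0[OF assms(1,3)] by simp
  next
    case False
    with W obtain j where j: "j \<in> vert n" "c j = 0" "\<forall>k\<in>cyc_open n j (pred n i). c k = 1"
      and c1: "c (pred n i) = 1" unfolding Wof_def Aof_def by blast
    have "pred n i \<noteq> j" using j c1 by auto
    from CO[OF assms(1,3) j(1) this] rec[OF j(1,2)] show False using j c1 by auto
  qed
qed



lemma ori_unique: assumes "n \<ge> 2" "o1 \<in> orientations n" "o2 \<in> orientations n"
  "\<forall>i\<in>vert n. indeg n o1 i = indeg n o2 i" "\<exists>i\<in>vert n. indeg n o1 i \<noteq> 1"
  shows "o1 = o2"
proof -
  have one: "1 \<in> vert n" using assms(1) by (simp add: vert_def)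
  show ?thesis
  proof (cases "o1 1 = o2 1")
    case True
    have "\<forall>k\<in>vert n. o1 k = o2 k"
    proof (rule cycle_induct[OF assms(1) one, where P="\<lambda>k. o1 k = o2 k"])
      show "o1 1 = o2 1" by fact
    next
      fix k assume "k \<in> vert n" "o1 (pred n k) = o2 (pred n k)"
      thus "o1 k = o2 k" using assms(4) unfolding indeg_def by (auto split: if_splits)
    qed
    thus ?thesis using assms(2,3) unfolding orientations_def by auto
  next
    case False
    have d: "\<forall>k\<in>vert n. o1 k \<noteq> o2 k"
    proof (rule cycle_induct[OF assms(1) one, where P="\<lambda>k. o1 k \<noteq> o2 k"])
      show "o1 1 \<noteq> o2 1" by fact
    next
      fix k assume "k \<in> vert n" "o1 (pred n k) \<noteq> o2 (pred n k)"
      thus "o1 k \<noteq> o2 k" using assms(4) unfolding indeg_def by (auto split: if_splits)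
    qed
    obtain i where i: "i \<in> vert n" "indeg n o1 i \<noteq> 1" using assms(5) by blast
    have "pred n i \<in> vert n" using pred_vert i by blast
    thus ?thesis using d i assms(4) unfolding indeg_def by (auto split: if_splits)
  qed
qed

lemma pred_bij: assumes "n \<ge> 2" shows "pred n ` vert n = vert n"
proof (rule endo_inj_surj)
  show "finite (vert n)" by (simp add: vert_def)
  show "pred n ` vert n \<subseteq> vert n" using pred_vert by blast
  show "inj_on (pred n) (vert n)"
    by (auto simp: inj_on_def pred_eq vert_def split: if_splits)
qed

lemma sum_indeg: assumes "n \<ge> 2" shows "(\<Sum>i\<in>vert n. indeg n oo i) = n"
proof -
  have inj: "inj_on (pred n) (vert n)"
    by (auto simp: inj_on_def pred_eq vert_def split: if_splits)
  have "(\<Sum>i\<in>vert n. (if oo (pred n i) then 1 else 0::nat)) = (\<Sum>i\<in>pred n ` vert n. (if oo i then 1 else 0))"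
    by (simp add: sum.reindex[OF inj])
  also have "\<dots> = (\<Sum>i\<in>vert n. (if oo i then 1 else 0))" using pred_bij[OF assms] by simp
  finally have e: "(\<Sum>i\<in>vert n. (if oo (pred n i) then 1 else 0::nat)) = (\<Sum>i\<in>vert n. (if oo i then 1 else 0))" .
  have "(\<Sum>i\<in>vert n. indeg n oo i) = (\<Sum>i\<in>vert n. (if oo (pred n i) then 1 else 0::nat)) + (\<Sum>i\<in>vert n. (if \<not> oo i then 1 else 0))"
    unfolding indeg_def by (simp add: sum.distrib)
  also have "\<dots> = (\<Sum>i\<in>vert n. ((if oo i then 1 else 0) + (if \<not> oo i then 1 else 0)))" unfolding e by (simp add: sum.distrib)
  also have "\<dots> = (\<Sum>i\<in>vert n. 1)" by (intro sum.cong) auto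
  finally show ?thesis by (simp add: vert_def)
qed

lemma orient_of_indeg: assumes "n \<ge> 2" "oo \<in> orientations n" "\<exists>i\<in>vert n. \<not> oo i"
  "\<forall>i\<in>vert n. c' i = indeg n oo i"
  shows "orient_of n c' = oo"
proof (cases "\<forall>i\<in>vert n. c' i = 1")
  case True
  obtain i0 where i0: "i0 \<in> vert n" "\<not> oo i0" using assms(3) by blast
  have "\<forall>k\<in>vert n. \<not> oo k"
  proof (rule cycle_induct[OF assms(1) i0(1), where P="\<lambda>k. \<not> oo k"])
    show "\<not> oo i0" by fact
  next
    fix k assume "k \<in> vert n" "\<not> oo (pred n k)"
    thus "\<not> oo k" using True assms(4) unfolding indeg_def by (auto split: if_splits)
  qed
  hence "oo = (\<lambda>i. False)" using assms(2) unfolding orientations_def by auto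
  thus ?thesis using True unfolding orient_of_def by simp
next
  case False
  have "(THE ori. ori \<in> orientations n \<and> (\<forall>i\<in>vert n. indeg n ori i = c' i)) = oo"
  proof (rule the_equality)
    show "oo \<in> orientations n \<and> (\<forall>i\<in>vert n. indeg n oo i = c' i)" using assms by auto
  next
    fix ori assume h: "ori \<in> orientations n \<and> (\<forall>i\<in>vert n. indeg n ori i = c' i)"
    show "ori = oo" using ori_unique[OF assms(1), of ori oo] h assms False by auto
  qed
  thus ?thesis using False unfolding orient_of_def by (simp only: if_False) 
qed

lemma fwd_back: "n \<ge> 2 \<Longrightarrow> i \<in> vert n \<Longrightarrow> j \<in> vert n \<Longrightarrow> fwd n i (cwd n i j - 1) = pred n j"
  by (auto simp: cwd_eq pred_eq fwd_def vert_def)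



definition oric :: "nat \<Rightarrow> (nat \<Rightarrow> nat) \<Rightarrow> nat \<Rightarrow> bool" where
  "oric n c = (\<lambda>k. k \<in> vert n \<and> Wof n c k)"

definition Mc :: "nat \<Rightarrow> (nat \<Rightarrow> nat) \<Rightarrow> nat set" where
  "Mc n c = {i \<in> vert n. c i = 2 \<and> \<not> cyc_first_max n c i}"

lemma fm_eq: "cyc_first_max n c i = (c i = 2 \<and> Aof n c i)"
  unfolding cyc_first_max_def Aof_def by simp


lemma L1: assumes "n \<ge> 2" "c \<in> ssm_recurrent n" "i \<in> vert n"
  shows "indeg n (oric n c) i = mcan n c i"
proof -
  have p: "pred n i \<in> vert n" using pred_vert assms by blast
  have le: "c i \<le> 2" using assms unfolding ssm_recurrent_def stable_def by auto
  have Wr: "Wof n c i \<longleftrightarrow> c i = 0 \<or> (c i = 1 \<and> Wof n c (pred n i))" by (rule W_rec[OF assms(1,3)])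
  consider "c i = 0" | "c i = 1" | "c i = 2" using le by linarith
  thus ?thesis
  proof cases
    case 1
    have "\<not> Wof n c (pred n i)" by (rule R0[OF assms 1])
    thus ?thesis using 1 Wr assms(3) p unfolding indeg_def mcan_def oric_def by auto
  next
    case 2
    thus ?thesis using Wr assms(3) p unfolding indeg_def mcan_def oric_def fm_eq by auto
  next
    case 3
    have "Aof n c i \<longleftrightarrow> Wof n c (pred n i)" using A_rec[OF assms(1,3), of c] 3 unfolding Wof_def by auto
    thus ?thesis using 3 Wr assms(3) p unfolding indeg_def mcan_def oric_def fm_eq by auto
  qed
qed

lemma oric_ori: "oric n c \<in> orientations n"
  unfolding orientations_def oric_def by auto

lemma no_zero_W: "\<forall>j\<in>vert n. c j \<noteq> 0 \<Longrightarrow> k \<in> vert n \<Longrightarrow> \<not> Wof n c k"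
  unfolding Wof_def Aof_def by auto

lemma L_ccw: assumes "n \<ge> 2" "c \<in> ssm_recurrent n"
  shows "\<exists>i\<in>vert n. \<not> oric n c i"
proof (cases "\<exists>i\<in>vert n. c i = 2")
  case True
  then obtain i where "i \<in> vert n" "c i = 2" by blast
  thus ?thesis unfolding oric_def Wof_def by (intro bexI[of _ i]) auto
next
  case False
  have "\<forall>j\<in>vert n. c j \<noteq> 0"
  proof
    fix j assume j: "j \<in> vert n" show "c j \<noteq> 0"
    proof
      assume "c j = 0"
      hence "\<exists>k\<in>cyc_open n j j. c k = 2" using assms(2) j unfolding ssm_recurrent_def by blast
      thus False using False unfolding cyc_open_def by auto
    qed
  qed
  moreover have "1 \<in> vert n" using assms(1) by (simp add: vert_def)
  ultimately show ?thesis using no_zero_W unfolding oric_def by blast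
qed

lemma L2: assumes "n \<ge> 2" "c \<in> ssm_recurrent n"
  shows "orient_of n (mcan n c) = oric n c"
  using orient_of_indeg[OF assms(1) oric_ori L_ccw[OF assms]] L1[OF assms] by auto

lemma Phi_eq: assumes "n \<ge> 2" "c \<in> ssm_recurrent n"
  shows "Phi_W n c = (oric n c, Mc n c)"
  unfolding Phi_W_def Mc_def using L2[OF assms] by simp

lemma decomp: assumes "n \<ge> 2" "c \<in> ssm_recurrent n" "i \<in> vert n"
  shows "c i = mcan n c i + (if i \<in> Mc n c then 1 else 0)"
proof -
  have le: "c i \<le> 2" using assms unfolding ssm_recurrent_def stable_def by auto
  thus ?thesis using assms(3) unfolding mcan_def Mc_def fm_eq by auto
qed

lemma c_out: "c \<in> ssm_recurrent n \<Longrightarrow> i \<notin> vert n \<Longrightarrow> c i = 0"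
  unfolding ssm_recurrent_def stable_def by auto

lemma in_PMO: assumes "n \<ge> 2" "c \<in> ssm_recurrent n"
  shows "(oric n c, Mc n c) \<in> PMO n"
proof -
  have "\<forall>i\<in>Mc n c. \<not> oric n c i \<and> \<not> oric n c (pred n i)"
  proof
    fix i assume i: "i \<in> Mc n c"
    hence iv: "i \<in> vert n" and c2: "c i = 2" and nA: "\<not> Aof n c i" unfolding Mc_def fm_eq by auto
    have "Aof n c i \<longleftrightarrow> Wof n c (pred n i)" using A_rec[OF assms(1) iv, of c] c2 unfolding Wof_def by auto
    thus "\<not> oric n c i \<and> \<not> oric n c (pred n i)" using nA c2 unfolding oric_def Wof_def by auto
  qed
  thus ?thesis unfolding PMO_def using oric_ori L_ccw[OF assms] by (auto simp: Mc_def)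
qed

lemma level_eq: assumes "n \<ge> 2" "c \<in> ssm_recurrent n"
  shows "level n c = int (card (Mc n c))"
proof -
  have "(\<Sum>i\<in>vert n. c i) = (\<Sum>i\<in>vert n. indeg n (oric n c) i + (if i \<in> Mc n c then 1 else 0))"
    using decomp[OF assms] L1[OF assms] by (intro sum.cong) auto
  also have "\<dots> = n + (\<Sum>i\<in>vert n. (if i \<in> Mc n c then 1 else 0))"
    by (simp add: sum.distrib sum_indeg[OF assms(1)])
  also have "(\<Sum>i\<in>vert n. (if i \<in> Mc n c then 1 else 0::nat)) = card (Mc n c)"
  proof -
    have "Mc n c \<subseteq> vert n" unfolding Mc_def by auto
    hence "vert n \<inter> Mc n c = Mc n c" by auto
    thus ?thesis by (simp add: sum.If_cases vert_def)
  qed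
  finally have "(\<Sum>i\<in>vert n. c i) = n + card (Mc n c)" .
  hence "(\<Sum>i\<in>vert n. int (c i)) = int n + int (card (Mc n c))" by (metis of_nat_add of_nat_sum)
  thus ?thesis unfolding level_def by simp
qed

lemma weight_eq: "weight01 n c = num_cw n (oric n c)"
proof -
  have "{i \<in> vert n. c i = 0 \<or> (c i = 1 \<and>
      (\<exists>j\<in>vert n. c j = 0 \<and> (\<forall>k\<in>cyc_open n j i \<union> {i}. c k = 1)))} = {i \<in> vert n. oric n c i}"
    unfolding oric_def Wof_def Aof_def by auto
  thus ?thesis unfolding weight01_def num_cw_def by simp
qed



lemma inj_Phi: assumes "n \<ge> 2" shows "inj_on (Phi_W n) (ssm_recurrent n)"
proof (rule inj_onI)
  fix c1 c2 assume c1: "c1 \<in> ssm_recurrent n" and c2: "c2 \<in> ssm_recurrent n" and e: "Phi_W n c1 = Phi_W n c2"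
  hence o: "oric n c1 = oric n c2" and m: "Mc n c1 = Mc n c2" using Phi_eq[OF assms] by auto
  show "c1 = c2"
  proof
    fix i show "c1 i = c2 i"
    proof (cases "i \<in> vert n")
      case True
      thus ?thesis using decomp[OF assms c1 True] decomp[OF assms c2 True] L1[OF assms c1 True] L1[OF assms c2 True] o m
        by simp
    next
      case False thus ?thesis using c_out c1 c2 by metis
    qed
  qed
qed

definition cof :: "nat \<Rightarrow> (nat \<Rightarrow> bool) \<Rightarrow> nat set \<Rightarrow> nat \<Rightarrow> nat" where
  "cof n Or M = (\<lambda>i. if i \<in> vert n then indeg n Or i + (if i \<in> M then 1 else 0) else 0)"

lemma surj_Phi: assumes "n \<ge> 2" "(Or, M) \<in> PMO n"
  shows "cof n Or M \<in> ssm_recurrent n \<and> Phi_W n (cof n Or M) = (Or, M)"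
proof -
  define c where "c = cof n Or M"
  have Oo: "Or \<in> orientations n" and MV: "M \<subseteq> vert n" and Mp: "\<forall>i\<in>M. \<not> Or i \<and> \<not> Or (pred n i)"
    and ccw: "\<exists>i\<in>vert n. \<not> Or i" using assms(2) unfolding PMO_def by auto
  have cdef: "\<And>i. i \<in> vert n \<Longrightarrow> c i = indeg n Or i + (if i \<in> M then 1 else 0)"
    unfolding c_def cof_def by simp
  have Orec: "\<forall>k\<in>vert n. Or k \<longleftrightarrow> c k = 0 \<or> (c k = 1 \<and> Or (pred n k))"
    using Mp cdef unfolding indeg_def by (auto split: if_splits)
  have c2: "\<forall>k\<in>vert n. c k \<le> 2" using Mp cdef unfolding indeg_def by (auto split: if_splits)
  have stab: "c \<in> stable n" unfolding stable_def using c2 by (auto simp: c_def cof_def)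
  have WO: "\<forall>k\<in>vert n. Wof n c k \<longleftrightarrow> Or k"
  proof (cases "\<exists>k0\<in>vert n. c k0 \<noteq> 1")
    case True
    then obtain k0 where k0: "k0 \<in> vert n" "c k0 \<noteq> 1" by blast
    show ?thesis
    proof (rule cycle_induct[OF assms(1) k0(1), where P="\<lambda>k. Wof n c k \<longleftrightarrow> Or k"])
      show "Wof n c k0 \<longleftrightarrow> Or k0" using W_rec[OF assms(1) k0(1), of c] bspec[OF Orec k0(1)] k0 by auto
    next
      fix k assume k: "k \<in> vert n" "Wof n c (pred n k) \<longleftrightarrow> Or (pred n k)"
      thus "Wof n c k \<longleftrightarrow> Or k" using W_rec[OF assms(1) k(1), of c] bspec[OF Orec k(1)] by simp
    qed
  next
    case False
    obtain i0 where i0: "i0 \<in> vert n" "\<not> Or i0" using ccw by blast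
    have "\<forall>k\<in>vert n. \<not> Or k"
    proof (rule cycle_induct[OF assms(1) i0(1), where P="\<lambda>k. \<not> Or k"])
      show "\<not> Or i0" by fact
    next
      fix k assume k: "k \<in> vert n" "\<not> Or (pred n k)"
      have "Or k \<longleftrightarrow> c k = 0 \<or> (c k = 1 \<and> Or (pred n k))" using Orec k(1) by blast
      moreover have "c k = 1" using False k(1) by blast
      ultimately show "\<not> Or k" using k(2) by simp
    qed
    moreover have "\<forall>k\<in>vert n. \<not> Wof n c k" using no_zero_W[of n c] False by auto
    ultimately show ?thesis by auto
  qed
  have rec: "c \<in> ssm_recurrent n"
    unfolding ssm_recurrent_def
  proof (intro CollectI conjI stab ballI impI)
    fix i j assume i: "i \<in> vert n" and j: "j \<in> vert n" and z: "c i = 0 \<and> c j = 0"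
    have Oi: "Or i" using bspec[OF Orec i] z by simp
    have Opj: "\<not> Or (pred n j)"
    proof
      assume "Or (pred n j)"
      hence "indeg n Or j \<ge> 1" unfolding indeg_def by simp
      thus False using z cdef[OF j] by simp
    qed
    have cw1: "cwd n i j \<le> n" using cwd_lt(1)[OF i j] .
    have cw0: "0 < cwd n i j"
    proof (cases "j = i")
      case True thus ?thesis using cwd_lt(4)[OF i i] assms(1) by simp
    next
      case False thus ?thesis using cwd_lt(2)[OF i j] by simp
    qed
    define m where "m = cwd n i j - 1"
    have nm: "\<not> Or (fwd n i m)" unfolding m_def fwd_back[OF assms(1) i j] by (rule Opj)
    have o0: "Or (fwd n i 0)" using Oi fwd_0[OF i] by simp
    obtain t where t: "t < m" "Or (fwd n i t)" "\<not> Or (fwd n i (Suc t))"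
      using discrete_ivt[where P="\<lambda>t. Or (fwd n i t)", OF o0 nm] by blast
    define k where "k = fwd n i (Suc t)"
    have tn: "Suc t < n" using t(1) cw1 cw0 m_def by linarith
    have kv: "k \<in> vert n" unfolding k_def by (rule fwd_vert[OF i tn])
    have pk: "pred n k = fwd n i t" unfolding k_def using fwd_pred[OF i _ tn] by simp
    have Opk: "Or (pred n k)" using pk t(2) by simp
    have nOk: "\<not> Or k" using t(3) k_def by simp
    have kM: "k \<notin> M" using Mp Opk by blast
    have ck: "c k = 2" using cdef[OF kv] kM Opk nOk unfolding indeg_def by simp
    have ckw: "cwd n i k = Suc t" unfolding k_def by (rule fwd_cwd[OF i _ tn]) simp
    have "k \<noteq> i" using ckw cwd_lt(4)[OF i i] tn by auto
    hence "k \<in> cyc_open n i j" unfolding cyc_open_def using kv ckw t(1) m_def cw0 by auto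
    thus "\<exists>k\<in>cyc_open n i j. c k = 2" using ck by blast
  qed
  have oc: "oric n c = Or"
  proof
    fix k show "oric n c k = Or k"
      using WO Oo unfolding oric_def orientations_def by auto
  qed
  have mc: "Mc n c = M"
  proof -
    have "\<And>i. i \<in> vert n \<Longrightarrow> (c i = 2 \<and> \<not> Aof n c i) \<longleftrightarrow> i \<in> M"
    proof -
      fix i assume i: "i \<in> vert n"
      have p: "pred n i \<in> vert n" using pred_vert i by blast
      have "c i \<noteq> 0 \<Longrightarrow> Aof n c i \<longleftrightarrow> Or (pred n i)"
        using A_rec[OF assms(1) i, of c] bspec[OF WO p] unfolding Wof_def by auto
      thus "(c i = 2 \<and> \<not> Aof n c i) \<longleftrightarrow> i \<in> M" using cdef[OF i] Mp unfolding indeg_def by (auto split: if_splits)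
    qed
    thus ?thesis unfolding Mc_def fm_eq using MV by auto
  qed
  show ?thesis using rec Phi_eq[OF assms(1) rec] oc mc c_def by simp
qed


theorem mainTheorem6:
  fixes n :: nat
  assumes "n \<ge> 3"
  shows "bij_betw (Phi_W n) (ssm_recurrent n) (PMO n) \<and>
    (\<forall>c\<in>ssm_recurrent n.
       level n c = int (card (snd (Phi_W n c))) \<and>
       weight01 n c = num_cw n (fst (Phi_W n c)))"
proof -
  have n2: "n \<ge> 2" using assms by simp
  have img: "Phi_W n ` ssm_recurrent n = PMO n"
  proof
    show "Phi_W n ` ssm_recurrent n \<subseteq> PMO n" using Phi_eq[OF n2] in_PMO[OF n2] by auto
  next
    show "PMO n \<subseteq> Phi_W n ` ssm_recurrent n"
    proof
      fix x assume x: "x \<in> PMO n"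
      obtain Or M where e: "x = (Or, M)" by (cases x)
      from surj_Phi[OF n2, of Or M] x e show "x \<in> Phi_W n ` ssm_recurrent n" by (metis image_eqI)
    qed
  qed
  have "bij_betw (Phi_W n) (ssm_recurrent n) (PMO n)"
    unfolding bij_betw_def using inj_Phi[OF n2] img by simp
  moreover have "\<forall>c\<in>ssm_recurrent n.
       level n c = int (card (snd (Phi_W n c))) \<and>
       weight01 n c = num_cw n (fst (Phi_W n c))"
    using Phi_eq[OF n2] level_eq[OF n2] weight_eq by simp
  ultimately show ?thesis by blast
qed

end
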